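(* Let $\mathbb{K}\in\{\mathbb{R},\mathbb{C}\}$ and let $\{T_j\}_{j=1}^n\subset\mathbb{K}^{d\times r}$ be a g-frame with g-frame operator $S=\sum_{j=1}^nT_jT_j^*$. Then $\operatorname{trace}(T_j^*S^{-1}T_j)\le r$ for all $j=1,\ldots,n$. Moreover, if $\operatorname{trace}(T_j^*S^{-1}T_j)=r$ for some $j$, then $T_j$ has no zero columns and $\operatorname{range}(S^{-1/2}T_k)\perp\operatorname{range}(S^{-1/2}T_j)$ for all $k\neq j$.
   Context: A collection $\{T_j\}_{j=1}^n\subset\mathbb{K}^{d\times r}$ is a g-frame if there are constants $0<A\le B<\infty$ with $A\|x\|^2\le\sum_{j=1}^n\|T_j^*x\|^2\le B\|x\|^2$ for all $x\in\mathbb{K}^d$. $S^{-1/2}$ is the inverse of the positive definite square root of $S$. *)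

theory Defs
  imports "Jordan_Normal_Form.Schur_Decomposition" "HOL-Library.Complex_Order"
begin

(* Matrices over K in {R, C} are represented as complex matrices (JNF type complex mat)
   whose entries lie in K; for K = R the conjugate transpose is the transpose. *)

definition field_K :: "complex set \<Rightarrow> bool" where
  "field_K K \<longleftrightarrow> K = \<real> \<or> K = UNIV"

definition entries_in :: "complex set \<Rightarrow> complex mat \<Rightarrow> bool" where
  "entries_in K M \<longleftrightarrow> (\<forall>a < dim_row M. \<forall>b < dim_col M. M $$ (a, b) \<in> K)"

definition norm_sq_vec :: "complex vec \<Rightarrow> real" where
  "norm_sq_vec v = Re (v \<bullet>c v)"

definition is_gframe :: "nat \<Rightarrow> nat \<Rightarrow> nat \<Rightarrow> (nat \<Rightarrow> complex mat) \<Rightarrow> bool" where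
  "is_gframe d r n T \<longleftrightarrow> (\<forall>j\<in>{1..n}. T j \<in> carrier_mat d r) \<and>
     (\<exists>A B. 0 < A \<and> A \<le> B \<and>
        (\<forall>x \<in> carrier_vec d.
           A * norm_sq_vec x \<le> (\<Sum>j=1..n. norm_sq_vec (mat_adjoint (T j) *\<^sub>v x)) \<and>
           (\<Sum>j=1..n. norm_sq_vec (mat_adjoint (T j) *\<^sub>v x)) \<le> B * norm_sq_vec x))"

definition gframe_op :: "nat \<Rightarrow> nat \<Rightarrow> (nat \<Rightarrow> complex mat) \<Rightarrow> complex mat" where
  "gframe_op d n T = mat d d (\<lambda>(a, b). \<Sum>j=1..n. (T j * mat_adjoint (T j)) $$ (a, b))"

definition mtrace :: "complex mat \<Rightarrow> complex" where
  "mtrace M = (\<Sum>i<dim_row M. M $$ (i, i))"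

definition positive_definite :: "nat \<Rightarrow> complex mat \<Rightarrow> bool" where
  "positive_definite d R \<longleftrightarrow> R \<in> carrier_mat d d \<and> mat_adjoint R = R \<and>
     (\<forall>v \<in> carrier_vec d. v \<noteq> 0\<^sub>v d \<longrightarrow> (R *\<^sub>v v) \<bullet>c v > 0)"

definition pd_sqrt :: "nat \<Rightarrow> complex mat \<Rightarrow> complex mat" where
  "pd_sqrt d S = (THE R. positive_definite d R \<and> R * R = S)"

definition mat_inv :: "nat \<Rightarrow> complex mat \<Rightarrow> complex mat" where
  "mat_inv d M = (THE B. B \<in> carrier_mat d d \<and> M * B = 1\<^sub>m d \<and> B * M = 1\<^sub>m d)"

definition mat_range :: "complex mat \<Rightarrow> complex vec set" where
  "mat_range M = {M *\<^sub>v x | x. x \<in> carrier_vec (dim_col M)}"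

definition orth_sets :: "complex vec set \<Rightarrow> complex vec set \<Rightarrow> bool" where
  "orth_sets U V \<longleftrightarrow> (\<forall>u\<in>U. \<forall>v\<in>V. u \<bullet>c v = 0)"

end

theory Submission
  imports Defs
begin


abbreviation adj :: "complex mat \<Rightarrow> complex mat" where "adj A \<equiv> mat_adjoint A"

lemma adj_index[simp]: "i < dim_col A \<Longrightarrow> j < dim_row A \<Longrightarrow> adj A $$ (i,j) = cnj (A $$ (j,i))"
  unfolding mat_adjoint_def by (simp add: mat_of_rows_def)
lemma adj_dims[simp]: "dim_row (adj A) = dim_col A" "dim_col (adj A) = dim_row A"
  unfolding mat_adjoint_def by (simp_all add: mat_of_rows_def)
lemma adj_carrier[simp]: "A \<in> carrier_mat n m \<Longrightarrow> adj A \<in> carrier_mat m n"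
  unfolding carrier_mat_def by simp
lemma adj_adj[simp]: "adj (adj A) = A"
  by (rule eq_matI) auto

lemma row_col_sum[simp]: "i < dim_row A \<Longrightarrow> j < dim_col B \<Longrightarrow> dim_col A = dim_row B \<Longrightarrow>
   row A i \<bullet> col B j = (\<Sum>l<dim_row B. A $$ (i,l) * B $$ (l,j))"
  by (auto simp: scalar_prod_def atLeast0LessThan intro!: sum.cong)

lemma mult_entry: "A \<in> carrier_mat n m \<Longrightarrow> B \<in> carrier_mat m p \<Longrightarrow> i < n \<Longrightarrow> j < p \<Longrightarrow>
   (A * B) $$ (i,j) = (\<Sum>l<m. A $$ (i,l) * B $$ (l,j))"
  by (auto simp: index_mult_mat scalar_prod_def atLeast0LessThan intro!: sum.cong)

lemma adj_mult: assumes "A \<in> carrier_mat n m" "B \<in> carrier_mat m p"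
  shows "adj (A * B) = adj B * adj A"
proof (rule eq_matI)
  fix i j assume ij: "i < dim_row (adj B * adj A)" "j < dim_col (adj B * adj A)"
  hence i: "i < p" and j: "j < n" using assms by auto
  have "adj (A*B) $$ (i,j) = cnj (\<Sum>l<m. A $$ (j,l) * B $$ (l,i))"
    using assms i j by (simp add: mult_entry)
  also have "\<dots> = (\<Sum>l<m. adj B $$ (i,l) * adj A $$ (l,j))"
    using assms i j by (auto simp: cnj_sum intro!: sum.cong)
  also have "\<dots> = (adj B * adj A) $$ (i,j)"
    using assms i j by (subst mult_entry[of _ p m _ n]) auto
  finally show "adj (A * B) $$ (i, j) = (adj B * adj A) $$ (i, j)" .
qed (use assms in auto)

lemma adj_add: "A \<in> carrier_mat n m \<Longrightarrow> B \<in> carrier_mat n m \<Longrightarrow> adj (A + B) = adj A + adj B"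
  by (rule eq_matI) auto
lemma adj_minus: "A \<in> carrier_mat n m \<Longrightarrow> B \<in> carrier_mat n m \<Longrightarrow> adj (A - B) = adj A - adj B"
  by (rule eq_matI) auto
lemma adj_one[simp]: "adj (1\<^sub>m n) = 1\<^sub>m n"
  by (rule eq_matI) auto

lemma mtrace_mult_comm: assumes "A \<in> carrier_mat n m" "B \<in> carrier_mat m n"
  shows "mtrace (A * B) = mtrace (B * A)"
proof -
  have "mtrace (A * B) = (\<Sum>i<n. \<Sum>l<m. A $$ (i,l) * B $$ (l,i))"
    unfolding mtrace_def using assms by (auto simp: mult_entry intro!: sum.cong)
  also have "\<dots> = (\<Sum>l<m. \<Sum>i<n. B $$ (l,i) * A $$ (i,l))"
    by (subst sum.swap) (simp add: mult.commute)
  also have "\<dots> = mtrace (B * A)"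
    unfolding mtrace_def using assms by (auto simp: mult_entry intro!: sum.cong)
  finally show ?thesis .
qed

lemma mtrace_add: "A \<in> carrier_mat n n \<Longrightarrow> B \<in> carrier_mat n n \<Longrightarrow> mtrace (A + B) = mtrace A + mtrace B"
  unfolding mtrace_def by (auto simp: sum.distrib)
lemma mtrace_minus: "A \<in> carrier_mat n n \<Longrightarrow> B \<in> carrier_mat n n \<Longrightarrow> mtrace (A - B) = mtrace A - mtrace B"
  unfolding mtrace_def by (auto simp: sum_subtractf)
lemma mtrace_one[simp]: "mtrace (1\<^sub>m n) = of_nat n"
  unfolding mtrace_def by auto

lemma cnj_mult_self: "cnj z * z = complex_of_real ((cmod z)\<^sup>2)"
  by (subst complex_norm_square) (simp add: mult.commute)

lemma mtrace_adj_self: assumes "A \<in> carrier_mat n m"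
  shows "mtrace (adj A * A) = of_real (\<Sum>i<m. \<Sum>l<n. (cmod (A $$ (l,i)))\<^sup>2)"
proof -
  have "mtrace (adj A * A) = (\<Sum>i<m. \<Sum>l<n. adj A $$ (i,l) * A $$ (l,i))"
    unfolding mtrace_def using assms by (auto simp: mult_entry[of _ m n _ m] intro!: sum.cong)
  also have "\<dots> = (\<Sum>i<m. \<Sum>l<n. of_real ((cmod (A $$ (l,i)))\<^sup>2))"
    using assms by (intro sum.cong refl) (simp add: cnj_mult_self)
  finally show ?thesis by (simp only: of_real_sum)
qed

lemma mtrace_adj_self_real: assumes "A \<in> carrier_mat n m"
  shows "Im (mtrace (adj A * A)) = 0" "Re (mtrace (adj A * A)) \<ge> 0"
  unfolding mtrace_adj_self[OF assms] Im_complex_of_real Re_complex_of_real by (auto intro!: sum_nonneg)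

lemma mtrace_adj_self_zero: assumes "A \<in> carrier_mat n m" "Re (mtrace (adj A * A)) = 0"
  shows "A = 0\<^sub>m n m"
proof (rule eq_matI)
  fix l i assume li: "l < dim_row (0\<^sub>m n m)" "i < dim_col (0\<^sub>m n m)"
  have "(\<Sum>i<m. \<Sum>l<n. (cmod (A $$ (l,i)))\<^sup>2) = 0"
    using assms mtrace_adj_self[OF assms(1)] by simp
  hence "\<forall>i\<in>{..<m}. (\<Sum>l<n. (cmod (A $$ (l,i)))\<^sup>2) = 0"
    by (subst (asm) sum_nonneg_eq_0_iff) (auto intro!: sum_nonneg)
  hence "\<forall>i<m. \<forall>l<n. (cmod (A $$ (l,i)))\<^sup>2 = 0"
    by (auto simp: sum_nonneg_eq_0_iff)
  hence "A $$ (l,i) = 0" using li by simp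
  thus "A $$ (l,i) = 0\<^sub>m n m $$ (l,i)" using li by simp
qed (use assms in auto)


lemma cinner_sum: "dim_vec v = dim_vec w \<Longrightarrow> v \<bullet>c w = (\<Sum>i<dim_vec w. v$i * cnj (w$i))"
  by (simp add: scalar_prod_def atLeast0LessThan)

lemma row_dot_vec[simp]: "i < dim_row A \<Longrightarrow> dim_col A = dim_vec v \<Longrightarrow>
   row A i \<bullet> v = (\<Sum>l<dim_vec v. A $$ (i,l) * v $ l)"
  by (simp add: scalar_prod_def atLeast0LessThan)

lemma mult_vec_entry: "A \<in> carrier_mat n m \<Longrightarrow> v \<in> carrier_vec m \<Longrightarrow> i < n \<Longrightarrow>
   (A *\<^sub>v v) $ i = (\<Sum>l<m. A $$ (i,l) * v $ l)"
  by (simp add: scalar_prod_def atLeast0LessThan)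

lemma adj_inner: assumes A: "A \<in> carrier_mat n m" and v: "v \<in> carrier_vec m" and w: "w \<in> carrier_vec n"
  shows "(A *\<^sub>v v) \<bullet>c w = v \<bullet>c (adj A *\<^sub>v w)"
proof -
  have "(A *\<^sub>v v) \<bullet>c w = (\<Sum>a<n. (\<Sum>b<m. A $$ (a,b) * v $ b) * cnj (w $ a))"
    using A v w by (subst cinner_sum) (auto simp: mult_vec_entry)
  also have "\<dots> = (\<Sum>b<m. \<Sum>a<n. v $ b * (A $$ (a,b) * cnj (w $ a)))"
    by (subst sum.swap) (simp add: sum_distrib_left sum_distrib_right mult_ac)
  also have "\<dots> = (\<Sum>b<m. v $ b * cnj (\<Sum>a<n. cnj (A $$ (a,b)) * w $ a))"
    by (simp add: sum_distrib_left)
  also have "\<dots> = v \<bullet>c (adj A *\<^sub>v w)"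
    using A v w by (subst cinner_sum) (auto simp: mult_vec_entry[of _ m n] intro!: sum.cong)
  finally show ?thesis .
qed

lemma mtrace_quad: assumes X: "X \<in> carrier_mat n p" and A: "A \<in> carrier_mat n n"
  shows "mtrace (adj X * A * X) = (\<Sum>i<p. (A *\<^sub>v col X i) \<bullet>c col X i)"
proof -
  have "mtrace (adj X * A * X) = (\<Sum>i<p. (adj X * (A * X)) $$ (i,i))"
    unfolding mtrace_def using X A by (simp add: assoc_mult_mat[of _ p n _ n _ p])
  also have "\<dots> = (\<Sum>i<p. \<Sum>l<n. cnj (X $$ (l,i)) * (\<Sum>m<n. A $$ (l,m) * X $$ (m,i)))"
    using X A by (intro sum.cong refl) (auto intro!: sum.cong)
  also have "\<dots> = (\<Sum>i<p. (A *\<^sub>v col X i) \<bullet>c col X i)"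
    using X A by (intro sum.cong refl) (auto simp: cinner_sum mult_vec_entry[of _ n n] mult.commute intro!: sum.cong)
  finally show ?thesis .
qed

lemma complex_pos_iff: "(0::complex) < z \<longleftrightarrow> 0 < Re z \<and> Im z = 0"
  by (auto simp: less_complex_def)
lemma complex_nonneg_iff: "(0::complex) \<le> z \<longleftrightarrow> 0 \<le> Re z \<and> Im z = 0"
  by (auto simp: less_eq_complex_def)

lemma pd_quad_nonneg: assumes "positive_definite d R" "v \<in> carrier_vec d"
  shows "0 \<le> Re ((R *\<^sub>v v) \<bullet>c v)" "Im ((R *\<^sub>v v) \<bullet>c v) = 0"
proof -
  have "0 \<le> (R *\<^sub>v v) \<bullet>c v"
  proof (cases "v = 0\<^sub>v d")
    case True
    have "R *\<^sub>v v = 0\<^sub>v d" using assms True by (intro eq_vecI) (auto simp: positive_definite_def)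
    thus ?thesis using True by (simp add: cinner_sum)
  next
    case False thus ?thesis using assms unfolding positive_definite_def by (auto intro: less_imp_le)
  qed
  thus "0 \<le> Re ((R *\<^sub>v v) \<bullet>c v)" "Im ((R *\<^sub>v v) \<bullet>c v) = 0" by (auto simp: complex_nonneg_iff)
qed

lemma pd_quad_pos: assumes "positive_definite d R" "v \<in> carrier_vec d" "v \<noteq> 0\<^sub>v d"
  shows "0 < Re ((R *\<^sub>v v) \<bullet>c v)"
  using assms unfolding positive_definite_def by (auto simp: complex_pos_iff)

lemma mtrace_uminus: "A \<in> carrier_mat n n \<Longrightarrow> mtrace (- A) = - mtrace A"
  unfolding mtrace_def by (simp add: sum_negf)

lemma trace_quad_nonneg:
  assumes R: "positive_definite d R" and X: "X \<in> carrier_mat d p"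
  shows "0 \<le> Re (mtrace (adj X * R * X))"
proof -
  have Rc: "R \<in> carrier_mat d d" using R by (simp add: positive_definite_def)
  have cX: "\<And>i. i < p \<Longrightarrow> col X i \<in> carrier_vec d" using X by (intro carrier_vecI) simp
  show ?thesis unfolding mtrace_quad[OF X Rc] Re_sum
    by (rule sum_nonneg) (use pd_quad_nonneg[OF R] cX in auto)
qed

lemma trace_quad_zero:
  assumes R: "positive_definite d R" and H: "H \<in> carrier_mat d d"
    and z: "Re (mtrace (adj H * R * H)) = 0"
  shows "H = 0\<^sub>m d d"
proof -
  have Rc: "R \<in> carrier_mat d d" using R by (simp add: positive_definite_def)
  have "(\<Sum>i<d. Re ((R *\<^sub>v col H i) \<bullet>c col H i)) = 0"
    using z mtrace_quad[OF H Rc] by (simp add: Re_sum)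
  hence "\<forall>i\<in>{..<d}. Re ((R *\<^sub>v col H i) \<bullet>c col H i) = 0"
    by (subst (asm) sum_nonneg_eq_0_iff) (auto intro!: pd_quad_nonneg[OF R] simp: H)
  have cz: "\<forall>i<d. col H i = 0\<^sub>v d"
  proof (intro allI impI)
    fix i assume "i < d"
    hence "Re ((R *\<^sub>v col H i) \<bullet>c col H i) = 0" using \<open>\<forall>i\<in>{..<d}. _\<close> by auto
    moreover have "col H i \<in> carrier_vec d" using H by (intro carrier_vecI) simp
    ultimately show "col H i = 0\<^sub>v d" using pd_quad_pos[OF R] by fastforce
  qed
  show ?thesis
  proof (rule eq_matI)
    fix i j assume "i < dim_row (0\<^sub>m d d)" "j < dim_col (0\<^sub>m d d)"
    hence ij: "i < d" "j < d" by auto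
    have "col H j $ i = 0" using cz ij by simp
    thus "H $$ (i,j) = 0\<^sub>m d d $$ (i,j)" using ij H by simp
  qed (use H in auto)
qed

lemma pd_sqrt_unique:
  assumes R: "positive_definite d R" and Q: "positive_definite d Q" and eq: "R * R = Q * Q"
  shows "R = Q"
proof -
  have Rc: "R \<in> carrier_mat d d" and Qc: "Q \<in> carrier_mat d d"
    and Rh: "adj R = R" and Qh: "adj Q = Q" using R Q by (auto simp: positive_definite_def)
  define H where "H = R - Q"
  have Hc: "H \<in> carrier_mat d d" using Rc Qc by (simp add: H_def minus_carrier_mat)
  have Hh: "adj H = H" using Rc Qc Rh Qh by (simp add: H_def adj_minus)
  have RH: "R * H = - (H * Q)"
  proof -
    have "R * H = R * R - R * Q" using Rc Qc by (simp add: H_def mult_minus_distrib_mat)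
    also have "\<dots> = Q * Q - R * Q" using eq by simp
    also have "\<dots> = - ((R - Q) * Q)" using Rc Qc
      by (subst minus_mult_distrib_mat[of _ d d]) (auto simp: minus_add_uminus_mat[of _ d d] uminus_add_mat)
    finally show ?thesis by (simp add: H_def)
  qed
  have "mtrace (adj H * R * H) = mtrace (H * (R * H))"
    using Hh Hc Rc by (simp add: assoc_mult_mat[of _ d d _ d _ d])
  also have "\<dots> = mtrace ((R * H) * H)" using Hc Rc by (intro mtrace_mult_comm[of _ d d]) auto
  also have "\<dots> = mtrace (- (H * Q * H))" using RH Hc Qc
    by (simp add: uminus_mult_left_mat)
  also have "\<dots> = - mtrace (adj H * Q * H)" using Hh Hc Qc by (simp add: mtrace_uminus[of _ d])
  finally have eq2: "Re (mtrace (adj H * R * H)) = - Re (mtrace (adj H * Q * H))" by simp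
  have "Re (mtrace (adj H * R * H)) = 0"
    using eq2 trace_quad_nonneg[OF R Hc] trace_quad_nonneg[OF Q Hc] by linarith
  hence "H = 0\<^sub>m d d" by (rule trace_quad_zero[OF R Hc])
  show ?thesis
  proof (rule eq_matI)
    fix i j assume ij: "i < dim_row Q" "j < dim_col Q"
    have "(R - Q) $$ (i,j) = 0\<^sub>m d d $$ (i,j)" using \<open>H = 0\<^sub>m d d\<close> H_def by simp
    thus "R $$ (i,j) = Q $$ (i,j)" using Rc Qc ij by simp
  qed (use Rc Qc in auto)
qed


definition Dg :: "nat \<Rightarrow> (nat \<Rightarrow> real) \<Rightarrow> complex mat" where
  "Dg d f = mat d d (\<lambda>(i,j). if i = j then complex_of_real (f i) else 0)"
definition FC :: "complex mat \<Rightarrow> nat \<Rightarrow> (nat \<Rightarrow> real) \<Rightarrow> complex mat" where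
  "FC U d f = U * Dg d f * adj U"

lemma Dg_carrier[simp]: "Dg d f \<in> carrier_mat d d" by (simp add: Dg_def)
lemma Dg_dims[simp]: "dim_row (Dg d f) = d" "dim_col (Dg d f) = d" by (simp_all add: Dg_def)

lemma sq_mult_carrier[simp]: "A \<in> carrier_mat d d \<Longrightarrow> B \<in> carrier_mat d d \<Longrightarrow> A * B \<in> carrier_mat d d"
  by (rule mult_carrier_mat)
lemma sq_assoc: "A \<in> carrier_mat d d \<Longrightarrow> B \<in> carrier_mat d d \<Longrightarrow> C \<in> carrier_mat d d \<Longrightarrow>
  A * B * C = A * (B * C)"
  by (rule assoc_mult_mat)
lemma sq_assoc_vec: "A \<in> carrier_mat d d \<Longrightarrow> B \<in> carrier_mat d d \<Longrightarrow> v \<in> carrier_vec d \<Longrightarrow>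
  (A * B) *\<^sub>v v = A *\<^sub>v (B *\<^sub>v v)"
  by (rule assoc_mult_mat_vec)

lemma sq_mult_vec_carrier[simp]: "A \<in> carrier_mat d d \<Longrightarrow> v \<in> carrier_vec d \<Longrightarrow> A *\<^sub>v v \<in> carrier_vec d"
  by (rule mult_mat_vec_carrier)

lemma mult_cnj_self': "z * cnj z = (complex_of_real (cmod z))\<^sup>2"
  by (metis complex_norm_square of_real_power)

lemma sum_if_eq: "i < (k::nat) \<Longrightarrow> (\<Sum>l<k. f l * (if l = i then c else 0)) = f i * (c::complex)"
proof -
  assume i: "i < k"
  have "(\<Sum>l<k. f l * (if l = i then c else 0)) = (\<Sum>l<k. if l = i then f l * c else 0)"
    by (rule sum.cong) auto
  also have "\<dots> = f i * c" using i by (simp add: sum.delta)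
  finally show ?thesis .
qed

lemma sum_if_eq': "i < (k::nat) \<Longrightarrow> (\<Sum>l<k. (if i = l then c else 0) * f l) = (c::complex) * f i"
proof -
  assume i: "i < k"
  have "(\<Sum>l<k. (if i = l then c else 0) * f l) = (\<Sum>l<k. if l = i then c * f l else 0)"
    by (rule sum.cong) auto
  also have "\<dots> = c * f i" using i by (simp add: sum.delta)
  finally show ?thesis .
qed

lemma Dg_index: "i < d \<Longrightarrow> j < d \<Longrightarrow> Dg d f $$ (i,j) = (if i = j then complex_of_real (f i) else 0)"
  by (simp add: Dg_def)

lemma Dg_mult: "Dg d f * Dg d g = Dg d (\<lambda>i. f i * g i)"
proof (rule eq_matI)
  fix i j assume "i < dim_row (Dg d (\<lambda>i. f i * g i))" "j < dim_col (Dg d (\<lambda>i. f i * g i))"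
  hence ij: "i < d" "j < d" by auto
  have "(Dg d f * Dg d g) $$ (i,j) = (\<Sum>l<d. Dg d f $$ (i,l) * Dg d g $$ (l,j))"
    using ij by (intro mult_entry) auto
  also have "\<dots> = (\<Sum>l<d. Dg d f $$ (i,l) * (if l = j then complex_of_real (g j) else 0))"
    using ij by (intro sum.cong refl) (auto simp: Dg_index)
  also have "\<dots> = Dg d (\<lambda>i. f i * g i) $$ (i,j)"
    using ij by (subst sum_if_eq) (auto simp: Dg_index)
  finally show "(Dg d f * Dg d g) $$ (i,j) = Dg d (\<lambda>i. f i * g i) $$ (i,j)" .
qed auto

lemma Dg_mult_vec: assumes v: "v \<in> carrier_vec d"
  shows "Dg d f *\<^sub>v v = vec d (\<lambda>i. complex_of_real (f i) * v $ i)"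
proof (rule eq_vecI)
  fix i assume "i < dim_vec (vec d (\<lambda>i. complex_of_real (f i) * v $ i))"
  hence i: "i < d" by simp
  have "(Dg d f *\<^sub>v v) $ i = (\<Sum>l<d. Dg d f $$ (i,l) * v $ l)"
    using i v by (intro mult_vec_entry) auto
  also have "\<dots> = (\<Sum>l<d. (if i = l then complex_of_real (f i) else 0) * v $ l)"
    using i by (intro sum.cong refl) (auto simp: Dg_index)
  also have "\<dots> = complex_of_real (f i) * v $ i" using i by (rule sum_if_eq')
  finally show "(Dg d f *\<^sub>v v) $ i = vec d (\<lambda>i. complex_of_real (f i) * v $ i) $ i" using i by simp
qed simp

lemma adj_Dg[simp]: "adj (Dg d f) = Dg d f"
  by (rule eq_matI) (auto simp: Dg_def)

lemma Dg_one: "Dg d (\<lambda>_. 1) = 1\<^sub>m d"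
  by (rule eq_matI) (auto simp: Dg_def)

context
  fixes U :: "complex mat" and d :: nat
  assumes U: "U \<in> carrier_mat d d" and UhU: "adj U * U = 1\<^sub>m d" and UUh: "U * adj U = 1\<^sub>m d"
begin

lemma FC_carrier[simp]: "FC U d f \<in> carrier_mat d d"
  using U unfolding FC_def by (intro mult_carrier_mat[of _ d d]) auto

lemma FC_mult: "FC U d f * FC U d g = FC U d (\<lambda>i. f i * g i)"
proof -
  have Uh: "adj U \<in> carrier_mat d d" using U by simp
  have "FC U d f * FC U d g = U * (Dg d f * ((adj U * U) * (Dg d g * adj U)))"
    unfolding FC_def using U Uh by (simp add: sq_assoc[of _ d])
  also have "\<dots> = U * ((Dg d f * Dg d g) * adj U)"
    using UhU Uh by (simp add: sq_assoc[of _ d])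
  finally show ?thesis using U Uh by (simp add: Dg_mult FC_def sq_assoc[of _ d])
qed

lemma adj_FC[simp]: "adj (FC U d f) = FC U d f"
proof -
  have Uh: "adj U \<in> carrier_mat d d" using U by simp
  have "adj (FC U d f) = adj (adj U) * adj (U * Dg d f)"
    unfolding FC_def using U Uh by (intro adj_mult[of _ d d]) auto
  also have "adj (U * Dg d f) = Dg d f * adj U" using U by (simp add: adj_mult[of _ d d _ d])
  finally show ?thesis using U Uh by (simp add: FC_def sq_assoc[of _ d])
qed

lemma FC_one: "FC U d (\<lambda>_. 1) = 1\<^sub>m d"
  using U UUh by (simp add: FC_def Dg_one)

lemma FC_pd: assumes f: "\<And>i. i < d \<Longrightarrow> f i > 0"
  shows "positive_definite d (FC U d f)"
  unfolding positive_definite_def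
proof (intro conjI ballI impI)
  show "FC U d f \<in> carrier_mat d d" by simp
  show "adj (FC U d f) = FC U d f" by simp
  fix v :: "complex vec" assume v: "v \<in> carrier_vec d" and v0: "v \<noteq> 0\<^sub>v d"
  have Uh: "adj U \<in> carrier_mat d d" using U by simp
  define w where "w = adj U *\<^sub>v v"
  have w: "w \<in> carrier_vec d" using Uh v by (simp add: w_def)
  have "FC U d f *\<^sub>v v = U *\<^sub>v (Dg d f *\<^sub>v w)"
    unfolding FC_def w_def using U Uh v by (simp add: sq_assoc_vec[of _ d])
  hence "(FC U d f *\<^sub>v v) \<bullet>c v = (Dg d f *\<^sub>v w) \<bullet>c w"
    using adj_inner[OF U _ v, of "Dg d f *\<^sub>v w"] w by (simp add: w_def)
  also have "\<dots> = (\<Sum>i<d. complex_of_real (f i * (cmod (w $ i))\<^sup>2))"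
    using w by (subst Dg_mult_vec[OF w], subst cinner_sum) (auto simp: mult_cnj_self' mult_ac intro!: sum.cong)
  finally have eq: "(FC U d f *\<^sub>v v) \<bullet>c v = complex_of_real (\<Sum>i<d. f i * (cmod (w $ i))\<^sup>2)" by simp
  have "w \<noteq> 0\<^sub>v d"
  proof
    assume "w = 0\<^sub>v d"
    hence "U *\<^sub>v w = 0\<^sub>v d" using U by (intro eq_vecI) auto
    moreover have "U *\<^sub>v w = v" unfolding w_def using U Uh v UUh by (simp add: sq_assoc_vec[of _ d, symmetric])
    ultimately show False using v0 by simp
  qed
  then obtain i where i: "i < d" "w $ i \<noteq> 0" using w by (auto simp: vec_eq_iff)
  have "0 < (\<Sum>i<d. f i * (cmod (w $ i))\<^sup>2)"
  proof (rule sum_pos2[of "{..<d}" i])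
    show "0 < f i * (cmod (w $ i))\<^sup>2" using i f by simp
  qed (use i f in \<open>auto intro!: mult_nonneg_nonneg less_imp_le[OF f]\<close>)
  thus "0 < (FC U d f *\<^sub>v v) \<bullet>c v" unfolding eq by (simp add: complex_pos_iff)
qed

end


definition onb :: "nat \<Rightarrow> complex vec list \<Rightarrow> bool" where
  "onb d vs \<longleftrightarrow> (\<forall>v\<in>set vs. v \<in> carrier_vec d) \<and>
     (\<forall>i<length vs. \<forall>j<length vs. vs!i \<bullet>c vs!j = (if i = j then 1 else 0))"

lemma mat_of_cols_index[simp]: "i < n \<Longrightarrow> j < length vs \<Longrightarrow> mat_of_cols n vs $$ (i,j) = vs!j $ i"
  by (simp add: mat_of_cols_def)

lemma cinner_swap: "dim_vec v = dim_vec w \<Longrightarrow> v \<bullet>c w = cnj (w \<bullet>c v)"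
  by (simp add: cinner_sum mult.commute)

lemma onb_VhV: assumes on: "onb d vs"
  shows "adj (mat_of_cols d vs) * mat_of_cols d vs = 1\<^sub>m (length vs)"
proof (rule eq_matI)
  fix i j assume "i < dim_row (1\<^sub>m (length vs))" "j < dim_col (1\<^sub>m (length vs))"
  hence ij: "i < length vs" "j < length vs" by auto
  have c: "vs!i \<in> carrier_vec d" "vs!j \<in> carrier_vec d" using on ij by (auto simp: onb_def)
  have "(adj (mat_of_cols d vs) * mat_of_cols d vs) $$ (i,j) =
      (\<Sum>l<d. adj (mat_of_cols d vs) $$ (i,l) * mat_of_cols d vs $$ (l,j))"
    using ij by (intro mult_entry) auto
  also have "\<dots> = (\<Sum>l<d. vs!j $ l * cnj (vs!i $ l))"
    using ij by (intro sum.cong refl) auto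
  also have "\<dots> = vs!j \<bullet>c vs!i" using c by (simp add: cinner_sum)
  also have "\<dots> = 1\<^sub>m (length vs) $$ (i,j)" using on ij by (auto simp: onb_def)
  finally show "(adj (mat_of_cols d vs) * mat_of_cols d vs) $$ (i,j) = 1\<^sub>m (length vs) $$ (i,j)" .
qed auto

lemma SV_lemma: fixes S :: "complex mat"
  assumes S: "S \<in> carrier_mat d d" and vs: "\<forall>v\<in>set vs. v \<in> carrier_vec d"
    and mu: "\<forall>i<length vs. S *\<^sub>v vs!i = mu i \<cdot>\<^sub>v vs!i"
  shows "S * mat_of_cols d vs = mat_of_cols d vs * mat (length vs) (length vs) (\<lambda>(i,j). if i = j then mu i else 0)"
proof (rule eq_matI)
  let ?k = "length vs"
  fix a i assume "a < dim_row (mat_of_cols d vs * mat ?k ?k (\<lambda>(i,j). if i = j then mu i else 0))"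
     "i < dim_col (mat_of_cols d vs * mat ?k ?k (\<lambda>(i,j). if i = j then mu i else 0))"
  hence ai: "a < d" "i < ?k" by auto
  have vi: "vs!i \<in> carrier_vec d" using vs ai by auto
  have "(S * mat_of_cols d vs) $$ (a,i) = (\<Sum>l<d. S $$ (a,l) * mat_of_cols d vs $$ (l,i))"
    using ai S by (intro mult_entry) auto
  also have "\<dots> = (S *\<^sub>v vs!i) $ a"
    using ai S vi by (subst mult_vec_entry[of _ d d]) auto
  also have "\<dots> = mu i * vs!i $ a" using mu ai vi by simp
  also have "\<dots> = (\<Sum>l<?k. mat_of_cols d vs $$ (a,l) * mat ?k ?k (\<lambda>(i,j). if i = j then mu i else 0) $$ (l,i))"
  proof -
    have "(\<Sum>l<?k. mat_of_cols d vs $$ (a,l) * mat ?k ?k (\<lambda>(i,j). if i = j then mu i else 0) $$ (l,i))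
       = (\<Sum>l<?k. vs!l $ a * (if l = i then mu i else 0))"
      using ai by (intro sum.cong refl) auto
    also have "\<dots> = vs!i $ a * mu i" using ai(2) by (rule sum_if_eq)
    finally show ?thesis by simp
  qed
  also have "\<dots> = (mat_of_cols d vs * mat ?k ?k (\<lambda>(i,j). if i = j then mu i else 0)) $$ (a,i)"
    using ai by (intro mult_entry[symmetric]) auto
  finally show "(S * mat_of_cols d vs) $$ (a,i) = (mat_of_cols d vs * mat ?k ?k (\<lambda>(i,j). if i = j then mu i else 0)) $$ (a,i)" .
qed (use S in auto)



lemma minus_zero_mat': "A \<in> carrier_mat n m \<Longrightarrow> A - 0\<^sub>m n m = (A :: complex mat)"
  by (rule eq_matI) auto

lemma spectral_step:
  assumes Spd: "positive_definite d S" and on: "onb d vs"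
    and ev: "\<forall>i<length vs. \<exists>\<mu>. S *\<^sub>v vs!i = \<mu> \<cdot>\<^sub>v vs!i"
    and kd: "length vs < d"
  shows "\<exists>y\<in>carrier_vec d. y \<bullet>c y = 1 \<and> (\<forall>i<length vs. vs!i \<bullet>c y = 0) \<and> (\<exists>\<mu>. S *\<^sub>v y = \<mu> \<cdot>\<^sub>v y)"
proof -
  define k where "k = length vs"
  have Sc: "S \<in> carrier_mat d d" and Sh: "adj S = S" using Spd by (auto simp: positive_definite_def)
  from ev obtain mu where mu: "\<forall>i<k. S *\<^sub>v vs!i = mu i \<cdot>\<^sub>v vs!i" unfolding k_def by metis
  have vsc: "\<forall>v\<in>set vs. v \<in> carrier_vec d" using on by (simp add: onb_def)
  define V where "V = mat_of_cols d vs"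
  have Vc: "V \<in> carrier_mat d k" by (simp add: V_def k_def)
  have Vhc: "adj V \<in> carrier_mat k d" using Vc by simp
  have VhV: "adj V * V = 1\<^sub>m k" unfolding V_def k_def by (rule onb_VhV[OF on])
  define Lam where "Lam = mat k k (\<lambda>(i,j). if i = j then mu i else 0)"
  have Lc: "Lam \<in> carrier_mat k k" "adj Lam \<in> carrier_mat k k" by (auto simp: Lam_def)
  have SV: "S * V = V * Lam" unfolding V_def Lam_def k_def
    by (rule SV_lemma[OF Sc vsc]) (use mu in \<open>simp add: k_def\<close>)
  have VhS: "adj V * S = adj Lam * adj V"
  proof -
    have "adj V * S = adj (S * V)" using Sc Vc Sh by (simp add: adj_mult[of _ d d _ k])
    also have "\<dots> = adj Lam * adj V" unfolding SV using Vc Lc by (simp add: adj_mult[of _ d k _ k])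
    finally show ?thesis .
  qed
  define P where "P = V * adj V"
  have Pc: "P \<in> carrier_mat d d" using Vc by (simp add: P_def mult_carrier_mat[of _ d k])
  have VhP: "adj V * P = adj V"
    unfolding P_def using Vc Vhc VhV by (simp add: assoc_mult_mat[of _ k d _ k _ d, symmetric])
  have PP: "P * P = P"
    unfolding P_def using Vc Vhc VhP[unfolded P_def] by (simp add: assoc_mult_mat[of _ d k _ d _ d])
  have Ph: "adj P = P" unfolding P_def using Vc Vhc by (simp add: adj_mult[of _ d k _ d])
  define Q where "Q = 1\<^sub>m d - P"
  have Qc: "Q \<in> carrier_mat d d" using Pc by (simp add: Q_def minus_carrier_mat)
  have Qh: "adj Q = Q" using Pc Ph by (simp add: Q_def adj_minus[of _ d d])
  have VhQ: "adj V * Q = 0\<^sub>m k d"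
    unfolding Q_def using Vhc Pc VhP by (subst mult_minus_distrib_mat[of "adj V" k d "1\<^sub>m d" d P], auto simp: right_mult_one_mat[OF Vhc] minus_r_inv_mat[OF Vhc])
  have QP: "Q * P = 0\<^sub>m d d"
    unfolding Q_def using Pc PP by (subst minus_mult_distrib_mat[of "1\<^sub>m d" d d P P d]) auto
  have QQ: "Q * Q = Q"
  proof -
    have "(1\<^sub>m d - P) * Q = 1\<^sub>m d * Q - P * Q" using Pc Qc by (intro minus_mult_distrib_mat) auto
    hence "Q * Q = 1\<^sub>m d * Q - P * Q" by (simp only: Q_def[symmetric])
    also have "P * Q = 0\<^sub>m d d" unfolding Q_def using Pc PP by (subst mult_minus_distrib_mat[of P d d "1\<^sub>m d" d P]) auto
    finally show ?thesis using Qc by (simp add: minus_zero_mat')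
  qed
  have PSQ: "P * S * Q = 0\<^sub>m d d"
  proof -
    have VhSc: "adj V * S \<in> carrier_mat k d" using Vhc Sc by (rule mult_carrier_mat)
    have "P * S * Q = V * (adj V * S) * Q"
      unfolding P_def by (simp add: assoc_mult_mat[OF Vc Vhc Sc])
    also have "\<dots> = V * ((adj V * S) * Q)" by (rule assoc_mult_mat[OF Vc VhSc Qc])
    also have "\<dots> = V * (adj Lam * (adj V * Q))"
      unfolding VhS by (simp add: assoc_mult_mat[OF Lc(2) Vhc Qc])
    also have "\<dots> = V * 0\<^sub>m k d" unfolding VhQ by (simp add: right_mult_zero_mat[OF Lc(2)])
    also have "\<dots> = 0\<^sub>m d d" by (rule right_mult_zero_mat[OF Vc])
    finally show ?thesis .
  qed
  define B where "B = S * Q - P"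
  have Bc: "B \<in> carrier_mat d d" using Sc Qc Pc by (simp add: B_def minus_carrier_mat)
  have SQc: "S * Q \<in> carrier_mat d d" using Sc Qc by simp
  have QpP: "Q + P = 1\<^sub>m d"
  proof (rule eq_matI)
    fix i j assume "i < dim_row (1\<^sub>m d)" "j < dim_col (1\<^sub>m d)"
    thus "(Q + P) $$ (i,j) = 1\<^sub>m d $$ (i,j)" using Pc unfolding Q_def by simp
  qed (use Pc in \<open>simp_all add: Q_def\<close>)
  have QB: "Q * B = S * Q"
  proof -
    have "Q * B = Q * (S * Q) - Q * P" unfolding B_def
      by (rule mult_minus_distrib_mat[OF Qc SQc Pc])
    also have "\<dots> = Q * (S * Q)" unfolding QP by (rule minus_zero_mat') (use Qc SQc in simp)
    also have "\<dots> = S * Q"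
    proof -
      have "S * Q = (Q + P) * (S * Q)" unfolding QpP by (rule left_mult_one_mat[OF SQc, symmetric])
      also have "\<dots> = Q * (S * Q) + P * (S * Q)" by (rule add_mult_distrib_mat[OF Qc Pc SQc])
      also have "\<dots> = Q * (S * Q) + 0\<^sub>m d d" using PSQ by (simp add: sq_assoc[OF Pc Sc Qc])
      also have "\<dots> = Q * (S * Q)" by (rule right_add_zero_mat) (use Qc SQc in simp)
      finally show ?thesis by (rule sym)
    qed
    finally show ?thesis .
  qed
  have trP: "mtrace P = of_nat k"
    unfolding P_def using mtrace_mult_comm[OF Vc Vhc] VhV by simp
  have trSQ: "0 \<le> Re (mtrace (S * Q))"
  proof -
    have "mtrace (S * Q) = mtrace (S * (Q * Q))" using QQ by simp
    also have "\<dots> = mtrace ((S * Q) * Q)" by (simp add: sq_assoc[OF Sc Qc Qc])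
    also have "\<dots> = mtrace (Q * (S * Q))" by (rule mtrace_mult_comm[OF SQc Qc])
    also have "\<dots> = mtrace (adj Q * S * Q)" using Qh by (simp add: sq_assoc[OF Qc Sc Qc])
    finally show ?thesis using trace_quad_nonneg[OF Spd Qc] by simp
  qed
  have trB: "mtrace B = mtrace (S * Q) - mtrace P" unfolding B_def by (rule mtrace_minus[OF SQc Pc])
  have ReB: "- real k \<le> Re (mtrace B)" using trB trP trSQ by simp
  obtain es where es: "char_poly B = (\<Prod>a\<leftarrow>es. [:- a, 1:])" "length es = d"
    using char_poly_factorized[OF Bc] by blast
  obtain T PP QQ' where sd: "schur_decomposition B es = (T, PP, QQ')"
    by (cases "schur_decomposition B es") auto
  from schur_decomposition[OF Bc es(1) sd]
  have sw: "similar_mat_wit B T PP QQ'" and dT: "diag_mat T = es" by auto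
  from sw Bc have Tc: "T \<in> carrier_mat d d" and PPc: "PP \<in> carrier_mat d d"
    and QQc: "QQ' \<in> carrier_mat d d" and QP1: "QQ' * PP = 1\<^sub>m d" and Beq: "B = PP * T * QQ'"
    unfolding similar_mat_wit_def Let_def by auto
  have "mtrace B = mtrace ((PP * T) * QQ')" using Beq by simp
  also have "\<dots> = mtrace (QQ' * (PP * T))" by (rule mtrace_mult_comm[of _ d d]) (use PPc Tc QQc in auto)
  also have "\<dots> = mtrace T" using QP1 Tc by (simp add: sq_assoc[OF QQc PPc Tc, symmetric])
  also have "\<dots> = sum_list es" unfolding dT[symmetric] mtrace_def diag_mat_def
    by (simp add: sum_set_upt_conv_sum_list_nat[symmetric] atLeast0LessThan)
  finally have trBes: "mtrace B = sum_list es" .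
  have "\<exists>e\<in>set es. e \<noteq> -1"
  proof (rule ccontr)
    assume "\<not> (\<exists>e\<in>set es. e \<noteq> -1)"
    hence all: "\<forall>e\<in>set es. e = -1" by auto
    have "map (\<lambda>_. -1) es = es" by (rule map_idI) (use all in auto)
    hence "sum_list es = sum_list (map (\<lambda>_. -1) es)" by simp
    also have "\<dots> = of_nat d * (-1)" using es(2) by (simp add: sum_list_triv)
    finally have "Re (mtrace B) = - real d" using trBes by simp
    thus False using ReB kd unfolding k_def by simp
  qed
  then obtain e where e: "e \<in> set es" "e \<noteq> -1" by blast
  have "poly (char_poly B) e = 0"
    unfolding es(1) poly_prod_list prod_list_zero_iff using e(1) by force
  hence "eigenvalue B e" using eigenvalue_root_char_poly[OF Bc] by simp
  then obtain x where x: "x \<in> carrier_vec d" "x \<noteq> 0\<^sub>v d" and Bx: "B *\<^sub>v x = e \<cdot>\<^sub>v x"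
    unfolding eigenvalue_def eigenvector_def using Bc by auto
  define y0 where "y0 = Q *\<^sub>v x"
  have y0c: "y0 \<in> carrier_vec d" using Qc x by (simp add: y0_def)
  have Sy0: "S *\<^sub>v y0 = e \<cdot>\<^sub>v y0"
  proof -
    have "S *\<^sub>v y0 = (S * Q) *\<^sub>v x" unfolding y0_def by (rule assoc_mult_mat_vec[OF Sc Qc x(1), symmetric])
    also have "\<dots> = (Q * B) *\<^sub>v x" using QB by simp
    also have "\<dots> = Q *\<^sub>v (e \<cdot>\<^sub>v x)" using Bx by (simp add: assoc_mult_mat_vec[OF Qc Bc x(1)])
    also have "\<dots> = e \<cdot>\<^sub>v y0" unfolding y0_def by (rule mult_mat_vec[OF Qc x(1)])
    finally show ?thesis .
  qed
  have Vy0: "adj V *\<^sub>v y0 = 0\<^sub>v k"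
  proof -
    have "adj V *\<^sub>v y0 = (adj V * Q) *\<^sub>v x" unfolding y0_def by (rule assoc_mult_mat_vec[OF Vhc Qc x(1), symmetric])
    also have "\<dots> = 0\<^sub>v k" unfolding VhQ by (rule eq_vecI) (use x in auto)
    finally show ?thesis .
  qed
  have y0nz: "y0 \<noteq> 0\<^sub>v d"
  proof
    assume y00: "y0 = 0\<^sub>v d"
    have Px: "(P *\<^sub>v x) $ i = x $ i" if i: "i < d" for i
    proof -
      have "x = (Q + P) *\<^sub>v x" unfolding QpP using x by simp
      also have "\<dots> = Q *\<^sub>v x + P *\<^sub>v x" by (rule add_mult_distrib_mat_vec[OF Qc Pc x(1)])
      finally have "x $ i = (Q *\<^sub>v x + P *\<^sub>v x) $ i" by simp
      also have "\<dots> = (Q *\<^sub>v x) $ i + (P *\<^sub>v x) $ i" using i Qc Pc by simp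
      also have "(Q *\<^sub>v x) $ i = 0" using y00 i unfolding y0_def by simp
      finally show ?thesis by simp
    qed
    have Bx2: "(B *\<^sub>v x) $ i = - x $ i" if i: "i < d" for i
    proof -
      have "B *\<^sub>v x = (S * Q) *\<^sub>v x - P *\<^sub>v x" unfolding B_def by (rule minus_mult_distrib_mat_vec[OF SQc Pc x(1)])
      also have "(S * Q) *\<^sub>v x = S *\<^sub>v y0" unfolding y0_def by (rule assoc_mult_mat_vec[OF Sc Qc x(1)])
      finally have "(B *\<^sub>v x) $ i = (S *\<^sub>v y0) $ i - (P *\<^sub>v x) $ i" using i Sc Pc by simp
      also have "(S *\<^sub>v y0) $ i = 0" using i Sc unfolding y00 by simp
      finally show ?thesis using Px[OF i] by simp
    qed
    obtain i where i: "i < d" "x $ i \<noteq> 0" using x by (auto simp: vec_eq_iff)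
    have "e * x $ i = - x $ i" using Bx2[OF i(1)] Bx i(1) x(1) by simp
    hence "(e + 1) * x $ i = 0" by (simp add: algebra_simps)
    hence "e + 1 = 0" using i(2) by simp
    thus False using e(2) by (simp add: add_eq_0_iff2)
  qed
  define s where "s = (\<Sum>i<d. (cmod (y0 $ i))\<^sup>2)"
  have y0y0: "y0 \<bullet>c y0 = complex_of_real s"
    unfolding s_def using y0c by (simp add: cinner_sum mult_cnj_self')
  have spos: "0 < s"
  proof -
    obtain i where i: "i < d" "y0 $ i \<noteq> 0" using y0nz y0c by (auto simp: vec_eq_iff)
    show ?thesis unfolding s_def by (rule sum_pos2[of _ i]) (use i in auto)
  qed
  define a where "a = complex_of_real (1 / sqrt s)"
  define y where "y = a \<cdot>\<^sub>v y0"
  have yc: "y \<in> carrier_vec d" using y0c by (simp add: y_def)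
  have "y \<bullet>c y = a * cnj a * (y0 \<bullet>c y0)"
    unfolding y_def using y0c by (simp add: cinner_sum sum_distrib_left mult_ac)
  also have "\<dots> = 1" unfolding y0y0 a_def using spos
    by (simp add: field_simps flip: of_real_mult)
  finally have yy: "y \<bullet>c y = 1" .
  have Vy: "adj V *\<^sub>v y = 0\<^sub>v k"
    unfolding y_def mult_mat_vec[OF Vhc y0c] Vy0 by (rule eq_vecI) auto
  have orth: "\<forall>i<length vs. vs!i \<bullet>c y = 0"
  proof (intro allI impI)
    fix i assume i: "i < length vs"
    have vi: "vs!i \<in> carrier_vec d" using vsc i by auto
    have "(adj V *\<^sub>v y) $ i = (\<Sum>l<d. adj V $$ (i,l) * y $ l)"
      using i yc Vhc by (intro mult_vec_entry) (auto simp: k_def)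
    also have "\<dots> = cnj (vs!i \<bullet>c y)"
      using i yc vi unfolding V_def by (auto simp: cinner_sum intro!: sum.cong)
    finally show "vs!i \<bullet>c y = 0" using Vy i by (simp add: k_def)
  qed
  have Sy: "S *\<^sub>v y = e \<cdot>\<^sub>v y"
    unfolding y_def mult_mat_vec[OF Sc y0c] Sy0 by (rule eq_vecI) auto
  show ?thesis using yc yy orth Sy by blast
qed


lemma spectral_list:
  assumes Spd: "positive_definite d S"
  shows "k \<le> d \<Longrightarrow> \<exists>vs. length vs = k \<and> onb d vs \<and> (\<forall>i<k. \<exists>\<mu>. S *\<^sub>v vs!i = \<mu> \<cdot>\<^sub>v vs!i)"
proof (induction k)
  case 0 show ?case by (intro exI[of _ "[]"]) (simp add: onb_def)
next
  case (Suc k)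
  then obtain vs where vs: "length vs = k" "onb d vs" "\<forall>i<k. \<exists>\<mu>. S *\<^sub>v vs!i = \<mu> \<cdot>\<^sub>v vs!i" by auto
  have "k < d" using Suc.prems by simp
  with spectral_step[OF Spd vs(2)] vs obtain y where y: "y \<in> carrier_vec d" "y \<bullet>c y = 1"
    "\<forall>i<k. vs!i \<bullet>c y = 0" "\<exists>\<mu>. S *\<^sub>v y = \<mu> \<cdot>\<^sub>v y" by auto
  have vsc: "\<forall>v\<in>set vs. v \<in> carrier_vec d" using vs(2) by (simp add: onb_def)
  have on: "onb d (vs @ [y])"
    unfolding onb_def
  proof (intro conjI allI impI ballI)
    fix v assume "v \<in> set (vs @ [y])" thus "v \<in> carrier_vec d" using vsc y(1) by auto
  next
    fix i j assume i: "i < length (vs @ [y])" and j: "j < length (vs @ [y])"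
    show "(vs @ [y])!i \<bullet>c (vs @ [y])!j = (if i = j then 1 else 0)"
    proof (cases "i < k")
      case True note ik = this
      show ?thesis
      proof (cases "j < k")
        case True thus ?thesis using ik vs(1,2) by (simp add: nth_append onb_def)
      next
        case False hence "j = k" using j vs(1) by simp
        thus ?thesis using ik vs(1) y(3) by (simp add: nth_append)
      qed
    next
      case False hence ik: "i = k" using i vs(1) by simp
      show ?thesis
      proof (cases "j < k")
        case True
        have vj: "vs!j \<in> carrier_vec d" using vsc True vs(1) by auto
        have "y \<bullet>c vs!j = cnj (vs!j \<bullet>c y)" using vj y(1) by (intro cinner_swap) auto
        thus ?thesis using True ik vs(1) y(3) by (simp add: nth_append)
      next
        case False hence "j = k" using j vs(1) by simp
        thus ?thesis using ik vs(1) y(2) by (simp add: nth_append)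
      qed
    qed
  qed
  have ev: "\<forall>i<Suc k. \<exists>\<mu>. S *\<^sub>v (vs @ [y])!i = \<mu> \<cdot>\<^sub>v (vs @ [y])!i"
  proof (intro allI impI)
    fix i assume "i < Suc k"
    thus "\<exists>\<mu>. S *\<^sub>v (vs @ [y])!i = \<mu> \<cdot>\<^sub>v (vs @ [y])!i"
      using vs y(4) by (cases "i < k") (auto simp: nth_append)
  qed
  show ?case using on ev vs(1) by (intro exI[of _ "vs @ [y]"]) auto
qed

lemma spectral_pd:
  assumes Spd: "positive_definite d S"
  shows "\<exists>U lam. U \<in> carrier_mat d d \<and> adj U * U = 1\<^sub>m d \<and> U * adj U = 1\<^sub>m d \<and>
     (\<forall>i<d. 0 < lam i) \<and> S = FC U d lam"
proof -
  have Sc: "S \<in> carrier_mat d d" using Spd by (simp add: positive_definite_def)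
  obtain vs where vs: "length vs = d" "onb d vs" "\<forall>i<d. \<exists>\<mu>. S *\<^sub>v vs!i = \<mu> \<cdot>\<^sub>v vs!i"
    using spectral_list[OF Spd, of d] by auto
  from vs(3) obtain mu where mu: "\<forall>i<d. S *\<^sub>v vs!i = mu i \<cdot>\<^sub>v vs!i" by metis
  have vsc: "\<forall>v\<in>set vs. v \<in> carrier_vec d" using vs(2) by (simp add: onb_def)
  define U where "U = mat_of_cols d vs"
  have Uc: "U \<in> carrier_mat d d" using mat_of_cols_carrier(1)[of d vs] vs(1) by (simp add: U_def)
  have Uhc: "adj U \<in> carrier_mat d d" using Uc by simp
  have UhU: "adj U * U = 1\<^sub>m d" unfolding U_def using onb_VhV[OF vs(2)] vs(1) by simp
  have UUh: "U * adj U = 1\<^sub>m d" by (rule mat_mult_left_right_inverse[OF Uhc Uc UhU])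
  define lam where "lam i = Re (mu i)" for i
  have mupos: "0 < lam i \<and> mu i = complex_of_real (lam i)" if i: "i < d" for i
  proof -
    have vi: "vs!i \<in> carrier_vec d" using vsc i vs(1) by auto
    have vv: "vs!i \<bullet>c vs!i = 1" using vs(1,2) i by (simp add: onb_def)
    have "(S *\<^sub>v vs!i) \<bullet>c vs!i = mu i * (vs!i \<bullet>c vs!i)" using mu i vi by simp
    also have "\<dots> = mu i" using vv by simp
    finally have "(S *\<^sub>v vs!i) \<bullet>c vs!i = mu i" .
    moreover have "vs!i \<noteq> 0\<^sub>v d" using vv vi by (auto simp: cinner_sum)
    ultimately have "0 < mu i" using Spd vi by (auto simp: positive_definite_def)
    thus ?thesis unfolding lam_def by (simp add: complex_pos_iff complex_eq_iff)
  qed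
  have SU: "S * U = U * Dg d lam"
  proof -
    have "S * U = U * mat d d (\<lambda>(i,j). if i = j then mu i else 0)"
      unfolding U_def using SV_lemma[OF Sc vsc] mu vs(1) by simp
    also have "mat d d (\<lambda>(i,j). if i = j then mu i else 0) = Dg d lam"
      unfolding Dg_def by (rule eq_matI) (auto simp: mupos)
    finally show ?thesis .
  qed
  have "S = S * (U * adj U)" using UUh Sc by simp
  also have "\<dots> = (S * U) * adj U" by (simp add: sq_assoc[OF Sc Uc Uhc])
  also have "\<dots> = FC U d lam" unfolding SU FC_def ..
  finally have "S = FC U d lam" .
  thus ?thesis using Uc UhU UUh mupos by blast
qed


lemma Dg_cong: "(\<And>i. i < d \<Longrightarrow> f i = g i) \<Longrightarrow> Dg d f = Dg d g"
  unfolding Dg_def by (rule eq_matI) auto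

lemma FC_cong: "(\<And>i. i < d \<Longrightarrow> f i = g i) \<Longrightarrow> FC U d f = FC U d g"
  unfolding FC_def using Dg_cong by metis

lemma mat_inv_eq: assumes M: "M \<in> carrier_mat d d" and B: "B \<in> carrier_mat d d"
  and MB: "M * B = 1\<^sub>m d" and BM: "B * M = 1\<^sub>m d"
  shows "mat_inv d M = B"
  unfolding mat_inv_def
proof (rule the_equality)
  show "B \<in> carrier_mat d d \<and> M * B = 1\<^sub>m d \<and> B * M = 1\<^sub>m d" using B MB BM by simp
  fix C assume C: "C \<in> carrier_mat d d \<and> M * C = 1\<^sub>m d \<and> C * M = 1\<^sub>m d"
  hence Cc: "C \<in> carrier_mat d d" by simp
  have "C = C * (M * B)" using MB right_mult_one_mat[OF Cc] by simp
  also have "\<dots> = (C * M) * B" using Cc M B by (simp add: sq_assoc[of _ d])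
  also have "\<dots> = B" using C B by simp
  finally show "C = B" .
qed

lemma pd_sqrt_eq: assumes R: "positive_definite d R" and RR: "R * R = S"
  shows "pd_sqrt d S = R"
  unfolding pd_sqrt_def
proof (rule the_equality)
  show "positive_definite d R \<and> R * R = S" using R RR by simp
  fix Q assume Q: "positive_definite d Q \<and> Q * Q = S"
  show "Q = R" using pd_sqrt_unique[of d Q R] Q R RR by simp
qed

lemma pd_facts:
  assumes Spd: "positive_definite d S"
  shows "\<exists>G. G \<in> carrier_mat d d \<and> adj G = G \<and> G * S * G = 1\<^sub>m d \<and>
    mat_inv d (pd_sqrt d S) = G \<and> mat_inv d S = G * G"
proof -
  obtain U lam where U: "U \<in> carrier_mat d d" "adj U * U = 1\<^sub>m d" "U * adj U = 1\<^sub>m d"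
    and lam: "\<forall>i<d. 0 < lam i" and S: "S = FC U d lam"
    using spectral_pd[OF Spd] by blast
  have lam': "\<And>i. i < d \<Longrightarrow> 0 < lam i" and lamnz: "\<And>i. i < d \<Longrightarrow> lam i \<noteq> 0"
    using lam by auto
  have lamabs: "\<And>i. i < d \<Longrightarrow> \<bar>lam i\<bar> = lam i" using lam by auto
  define R where "R = FC U d (\<lambda>i. sqrt (lam i))"
  define G where "G = FC U d (\<lambda>i. 1 / sqrt (lam i))"
  have Rc: "R \<in> carrier_mat d d" and Gc: "G \<in> carrier_mat d d"
    unfolding R_def G_def using FC_carrier[OF U] by auto
  have Gh: "adj G = G" unfolding G_def using adj_FC[OF U] by simp
  have Rpd: "positive_definite d R" unfolding R_def using FC_pd[OF U] lam by simp
  have RR: "R * R = S" unfolding R_def S using FC_mult[OF U]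
    by (simp, intro FC_cong) (simp add: lam' lamnz less_imp_le)
  have RG: "R * G = 1\<^sub>m d" unfolding R_def G_def FC_mult[OF U]
    by (subst FC_one[OF U, symmetric], intro FC_cong) (simp add: lam' lamnz)
  have GR: "G * R = 1\<^sub>m d" unfolding R_def G_def FC_mult[OF U]
    by (subst FC_one[OF U, symmetric], intro FC_cong) (simp add: lam' lamnz)
  have GG: "G * G = FC U d (\<lambda>i. 1 / lam i)" unfolding G_def FC_mult[OF U]
    by (intro FC_cong) (simp add: lam' lamnz real_sqrt_mult[symmetric] less_imp_le)
  have SGG: "S * (G * G) = 1\<^sub>m d" unfolding GG S FC_mult[OF U]
    by (subst FC_one[OF U, symmetric], intro FC_cong) (simp add: lam' lamnz)
  have GGS: "(G * G) * S = 1\<^sub>m d" unfolding GG S FC_mult[OF U]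
    by (subst FC_one[OF U, symmetric], intro FC_cong) (simp add: lam' lamnz)
  have GSG: "G * S * G = 1\<^sub>m d" unfolding G_def S FC_mult[OF U]
    by (subst FC_one[OF U, symmetric], intro FC_cong) (simp add: lam' lamnz lamabs field_simps)
  have "pd_sqrt d S = R" by (rule pd_sqrt_eq[OF Rpd RR])
  hence i1: "mat_inv d (pd_sqrt d S) = G" using mat_inv_eq[OF Rc Gc RG GR] by simp
  have Sc: "S \<in> carrier_mat d d" using Spd by (simp add: positive_definite_def)
  have i2: "mat_inv d S = G * G" by (rule mat_inv_eq[OF Sc _ SGG GGS]) (use Gc in simp)
  show ?thesis using Gc Gh GSG i1 i2 by blast
qed


lemma triple_entry: assumes Y: "Y \<in> carrier_mat p d" and Z: "Z \<in> carrier_mat d d" and X: "X \<in> carrier_mat d q"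
  and a: "a < p" and b: "b < q"
  shows "(Y * Z * X) $$ (a,b) = (\<Sum>l<d. \<Sum>m<d. Y $$ (a,m) * Z $$ (m,l) * X $$ (l,b))"
proof -
  have "(Y * Z * X) $$ (a,b) = (\<Sum>l<d. (Y * Z) $$ (a,l) * X $$ (l,b))"
    using Y Z X a b by (intro mult_entry[of _ p d]) auto
  also have "\<dots> = (\<Sum>l<d. (\<Sum>m<d. Y $$ (a,m) * Z $$ (m,l)) * X $$ (l,b))"
    using Y Z a by (intro sum.cong refl) (simp add: mult_entry[of _ p d _ d])
  also have "\<dots> = (\<Sum>l<d. \<Sum>m<d. Y $$ (a,m) * Z $$ (m,l) * X $$ (l,b))"
    by (simp add: sum_distrib_right)
  finally show ?thesis .
qed

lemma sum_decomp:
  fixes M :: "complex mat" and F :: "nat \<Rightarrow> complex mat"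
  assumes J: "finite J" and M: "M \<in> carrier_mat d d" and F: "\<forall>j\<in>J. F j \<in> carrier_mat d d"
    and Md: "\<forall>a<d. \<forall>b<d. M $$ (a,b) = (\<Sum>j\<in>J. F j $$ (a,b))"
    and Y: "Y \<in> carrier_mat p d" and X: "X \<in> carrier_mat d q" and a: "a < p" and b: "b < q"
  shows "(Y * M * X) $$ (a,b) = (\<Sum>j\<in>J. (Y * F j * X) $$ (a,b))"
proof -
  have "(Y * M * X) $$ (a,b) = (\<Sum>l<d. \<Sum>m<d. Y $$ (a,m) * M $$ (m,l) * X $$ (l,b))"
    by (rule triple_entry[OF Y M X a b])
  also have "\<dots> = (\<Sum>l<d. \<Sum>m<d. \<Sum>j\<in>J. Y $$ (a,m) * F j $$ (m,l) * X $$ (l,b))"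
    using Md by (intro sum.cong refl) (simp add: sum_distrib_left sum_distrib_right)
  also have "\<dots> = (\<Sum>l<d. \<Sum>j\<in>J. \<Sum>m<d. Y $$ (a,m) * F j $$ (m,l) * X $$ (l,b))"
    by (rule sum.cong[OF refl], rule sum.swap)
  also have "\<dots> = (\<Sum>j\<in>J. \<Sum>l<d. \<Sum>m<d. Y $$ (a,m) * F j $$ (m,l) * X $$ (l,b))"
    by (rule sum.swap)
  also have "\<dots> = (\<Sum>j\<in>J. (Y * F j * X) $$ (a,b))"
    using F by (intro sum.cong refl) (simp add: triple_entry[OF Y _ X a b])
  finally show ?thesis .
qed

lemma trace_decomp:
  fixes M :: "complex mat" and F :: "nat \<Rightarrow> complex mat"
  assumes J: "finite J" and M: "M \<in> carrier_mat d d" and F: "\<forall>j\<in>J. F j \<in> carrier_mat d d"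
    and Md: "\<forall>a<d. \<forall>b<d. M $$ (a,b) = (\<Sum>j\<in>J. F j $$ (a,b))"
    and Y: "Y \<in> carrier_mat p d" and X: "X \<in> carrier_mat d p"
  shows "mtrace (Y * M * X) = (\<Sum>j\<in>J. mtrace (Y * F j * X))"
proof -
  have "mtrace (Y * M * X) = (\<Sum>i<p. \<Sum>j\<in>J. (Y * F j * X) $$ (i,i))"
    unfolding mtrace_def using Y by (intro sum.cong) (auto intro: sum_decomp[OF J M F Md Y X])
  also have "\<dots> = (\<Sum>j\<in>J. \<Sum>i<p. (Y * F j * X) $$ (i,i))" by (rule sum.swap)
  also have "\<dots> = (\<Sum>j\<in>J. mtrace (Y * F j * X))"
    unfolding mtrace_def using Y by simp
  finally show ?thesis .
qed

lemma quad_decomp: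
  fixes M :: "complex mat" and F :: "nat \<Rightarrow> complex mat"
  assumes J: "finite J" and M: "M \<in> carrier_mat d d" and F: "\<forall>j\<in>J. F j \<in> carrier_mat d d"
    and Md: "\<forall>a<d. \<forall>b<d. M $$ (a,b) = (\<Sum>j\<in>J. F j $$ (a,b))"
    and x: "x \<in> carrier_vec d"
  shows "(M *\<^sub>v x) \<bullet>c x = (\<Sum>j\<in>J. (F j *\<^sub>v x) \<bullet>c x)"
proof -
  have "(M *\<^sub>v x) \<bullet>c x = (\<Sum>a<d. (\<Sum>l<d. M $$ (a,l) * x $ l) * cnj (x $ a))"
    using M x by (subst cinner_sum) (auto simp: mult_vec_entry[OF M x] intro!: sum.cong)
  also have "\<dots> = (\<Sum>a<d. \<Sum>l<d. \<Sum>j\<in>J. F j $$ (a,l) * x $ l * cnj (x $ a))"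
    using Md by (intro sum.cong refl) (simp add: sum_distrib_right)
  also have "\<dots> = (\<Sum>a<d. \<Sum>j\<in>J. \<Sum>l<d. F j $$ (a,l) * x $ l * cnj (x $ a))"
    by (rule sum.cong[OF refl], rule sum.swap)
  also have "\<dots> = (\<Sum>j\<in>J. \<Sum>a<d. \<Sum>l<d. F j $$ (a,l) * x $ l * cnj (x $ a))"
    by (rule sum.swap)
  also have "\<dots> = (\<Sum>j\<in>J. (F j *\<^sub>v x) \<bullet>c x)"
  proof (intro sum.cong refl)
    fix j assume j: "j \<in> J"
    have Fj: "F j \<in> carrier_mat d d" using F j by simp
    show "(\<Sum>a<d. \<Sum>l<d. F j $$ (a,l) * x $ l * cnj (x $ a)) = (F j *\<^sub>v x) \<bullet>c x"
      using Fj x by (subst cinner_sum) (auto simp: mult_vec_entry[OF Fj x] sum_distrib_right intro!: sum.cong)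
  qed
  finally show ?thesis .
qed


lemma assoc_dim: "dim_col A = dim_row B \<Longrightarrow> dim_col B = dim_row C \<Longrightarrow> A * B * C = A * (B * (C :: 'a :: semiring_0 mat))"
  by (rule assoc_mult_mat[of A "dim_row A" "dim_col A" B "dim_col B" C "dim_col C"]; rule carrier_matI; simp)

lemma key:
  fixes T :: "nat \<Rightarrow> complex mat"
  assumes J: "finite J" and j: "j \<in> J" and Tc: "\<forall>k\<in>J. T k \<in> carrier_mat d r"
    and Gc: "G \<in> carrier_mat d d" and Gh: "adj G = G" and Sc: "S \<in> carrier_mat d d"
    and Sd: "\<forall>a<d. \<forall>b<d. S $$ (a,b) = (\<Sum>k\<in>J. (T k * adj (T k)) $$ (a,b))"
    and GSG: "G * S * G = 1\<^sub>m d"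
  shows "mtrace (adj (T j) * (G * G) * T j) \<le> of_nat r \<and>
    (mtrace (adj (T j) * (G * G) * T j) = of_nat r \<longrightarrow>
      (\<forall>c<r. col (T j) c \<noteq> 0\<^sub>v d) \<and>
      (\<forall>k\<in>J. k \<noteq> j \<longrightarrow> orth_sets (mat_range (G * T k)) (mat_range (G * T j))))"
proof -
  have Tj: "T j \<in> carrier_mat d r" using Tc j by simp
  define W where "W k = G * T k" for k
  have Wc: "W k \<in> carrier_mat d r" if "k \<in> J" for k using Tc that Gc by (simp add: W_def mult_carrier_mat[of _ d d])
  have adjW: "adj (W k) = adj (T k) * G" if "k \<in> J" for k
    using Tc that Gc Gh by (simp add: W_def adj_mult[of _ d d _ r])
  define M where "M = adj (W j) * W j"
  have Mc: "M \<in> carrier_mat r r" using Wc[OF j] by (simp add: M_def mult_carrier_mat[of _ r d])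
  have Mh: "adj M = M" using Wc[OF j] by (simp add: M_def adj_mult[of _ r d _ r])
  have trM_eq: "adj (T j) * (G * G) * T j = M"
    unfolding M_def unfolding adjW[OF j] unfolding W_def using Tj Gc by (simp add: assoc_dim)
  define N where "N k = adj (W k) * W j" for k
  have Nc: "N k \<in> carrier_mat r r" if "k \<in> J" for k
    using Wc[OF that] Wc[OF j] by (simp add: N_def mult_carrier_mat[of _ r d])
  define Y where "Y = adj (W j) * G"
  define X where "X = G * W j"
  have Yc: "Y \<in> carrier_mat r d" using Wc[OF j] Gc by (simp add: Y_def mult_carrier_mat[of _ r d])
  have Xc: "X \<in> carrier_mat d r" using Wc[OF j] Gc by (simp add: X_def mult_carrier_mat[of _ d d])
  have Mdec: "M = Y * S * X"
  proof -
    have "Y * S * X = adj (W j) * (G * S * G) * W j"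
      unfolding Y_def X_def using Wc[OF j] Gc Sc by (simp add: assoc_dim)
    also have "\<dots> = M" unfolding GSG M_def using Wc[OF j] by simp
    finally show ?thesis by simp
  qed
  have NN: "adj (N k) * N k = Y * (T k * adj (T k)) * X" if k: "k \<in> J" for k
  proof -
    have "adj (N k) = adj (W j) * W k"
      unfolding N_def using Wc[OF k] Wc[OF j] by (simp add: adj_mult[of _ r d _ r])
    hence "adj (N k) * N k = adj (W j) * W k * (adj (W k) * W j)" by (simp add: N_def)
    also have "\<dots> = Y * (T k * adj (T k)) * X"
      unfolding adjW[OF k] Y_def X_def unfolding W_def using Tc[rule_format, OF k] Tj Gc
      by (simp add: assoc_dim)
    finally show ?thesis .
  qed
  have Fc: "\<forall>k\<in>J. T k * adj (T k) \<in> carrier_mat d d"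
    using Tc by (auto intro: mult_carrier_mat[of _ d r])
  have trM: "mtrace M = (\<Sum>k\<in>J. mtrace (adj (N k) * N k))"
    unfolding Mdec trace_decomp[OF J Sc Fc Sd Yc Xc] using NN by simp
  define t where "t k = Re (mtrace (adj (N k) * N k))" for k
  have tnn: "0 \<le> t k" if "k \<in> J" for k unfolding t_def using mtrace_adj_self_real[OF Nc[OF that]] by simp
  have tim: "Im (mtrace (adj (N k) * N k)) = 0" if "k \<in> J" for k using mtrace_adj_self_real[OF Nc[OF that]] by simp
  have ImM: "Im (mtrace M) = 0" unfolding trM Im_sum using tim by simp
  have ReM: "Re (mtrace M) = (\<Sum>k\<in>J. t k)" unfolding trM Re_sum t_def ..
  define s where "s = (\<Sum>k\<in>J - {j}. t k)"
  have snn: "0 \<le> s" unfolding s_def using tnn by (auto intro: sum_nonneg)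
  have NjM: "N j = M" by (simp add: N_def M_def)
  have tj: "t j = Re (mtrace (M * M))" unfolding t_def NjM Mh ..
  have ReM2: "Re (mtrace M) = t j + s" unfolding ReM s_def using J j by (simp add: sum.remove)
  define D where "D = 1\<^sub>m r - M"
  have Dc: "D \<in> carrier_mat r r" using Mc by (simp add: D_def minus_carrier_mat)
  have Dh: "adj D = D" unfolding D_def using Mc Mh by (simp add: adj_minus[of _ r r])
  have MMc: "M * M \<in> carrier_mat r r" using Mc by simp
  have DD: "adj D * D = (1\<^sub>m r - M) - (M - M * M)"
  proof -
    have "(1\<^sub>m r - M) * D = 1\<^sub>m r * D - M * D" by (rule minus_mult_distrib_mat) (use Mc Dc in auto)
    hence "adj D * D = 1\<^sub>m r * D - M * D" unfolding Dh by (simp only: D_def[symmetric])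
    also have "1\<^sub>m r * D = 1\<^sub>m r - M" using left_mult_one_mat[OF Dc] by (simp only: D_def)
    also have "M * D = M * 1\<^sub>m r - M * M" unfolding D_def by (rule mult_minus_distrib_mat[OF Mc]) (use Mc in auto)
    also have "M * 1\<^sub>m r = M" using Mc by simp
    finally show ?thesis .
  qed
  have trDD: "mtrace (adj D * D) = of_nat r - 2 * mtrace M + mtrace (M * M)"
    unfolding DD using Mc MMc
    by (simp add: mtrace_minus[of _ r] minus_carrier_mat)
  have ReDD: "0 \<le> Re (mtrace (adj D * D))" using mtrace_adj_self_real[OF Dc] by simp
  have ineq: "real r - 2 * Re (mtrace M) + t j \<ge> 0" using ReDD trDD tj by simp
  have part1: "mtrace (adj (T j) * (G * G) * T j) \<le> of_nat r"
    unfolding trM_eq less_eq_complex_def using ImM ineq ReM2 snn by simp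
  have part2: "(\<forall>c<r. col (T j) c \<noteq> 0\<^sub>v d) \<and>
      (\<forall>k\<in>J. k \<noteq> j \<longrightarrow> orth_sets (mat_range (G * T k)) (mat_range (G * T j)))"
    if eqr: "mtrace (adj (T j) * (G * G) * T j) = of_nat r"
  proof -
    have m: "Re (mtrace M) = real r" using eqr trM_eq by simp
    have s0: "s = 0" using m ReM2 ineq snn by simp
    have "Re (mtrace (adj D * D)) = 0" using trDD tj m ReM2 s0 by simp
    hence "D = 0\<^sub>m r r" by (rule mtrace_adj_self_zero[OF Dc])
    hence M1: "M = 1\<^sub>m r"
    proof -
      assume D0: "D = 0\<^sub>m r r"
      show "M = 1\<^sub>m r"
      proof (rule eq_matI)
        fix a b assume ab: "a < dim_row (1\<^sub>m r)" "b < dim_col (1\<^sub>m r)"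
        have "D $$ (a,b) = 0" using D0 ab by simp
        thus "M $$ (a,b) = 1\<^sub>m r $$ (a,b)" using ab Mc unfolding D_def by simp
      qed (use Mc in auto)
    qed
    have cols: "\<forall>c<r. col (T j) c \<noteq> 0\<^sub>v d"
    proof (intro allI impI notI)
      fix c assume c: "c < r" and c0: "col (T j) c = 0\<^sub>v d"
      have Wz: "W j $$ (l,c) = 0" if l: "l < d" for l
      proof -
        have "W j $$ (l,c) = (\<Sum>m<d. G $$ (l,m) * T j $$ (m,c))"
          unfolding W_def using l c Gc Tj by (intro mult_entry) auto
        also have "\<dots> = 0"
        proof (rule sum.neutral, intro ballI)
          fix m assume "m \<in> {..<d}"
          hence "T j $$ (m,c) = col (T j) c $ m" using c Tj by simp
          thus "G $$ (l,m) * T j $$ (m,c) = 0" using c0 \<open>m \<in> {..<d}\<close> by simp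
        qed
        finally show ?thesis .
      qed
      have "M $$ (c,c) = (\<Sum>l<d. adj (W j) $$ (c,l) * W j $$ (l,c))"
        unfolding M_def using c Wc[OF j] by (intro mult_entry) auto
      also have "\<dots> = 0" using Wz by simp
      finally have "M $$ (c,c) = 0" .
      thus False using M1 c by simp
    qed
    have orth: "\<forall>k\<in>J. k \<noteq> j \<longrightarrow> orth_sets (mat_range (G * T k)) (mat_range (G * T j))"
    proof (intro ballI impI)
      fix k assume k: "k \<in> J" "k \<noteq> j"
      have "\<forall>k\<in>J - {j}. t k = 0"
        using s0 unfolding s_def using J tnn by (subst (asm) sum_nonneg_eq_0_iff) auto
      hence "t k = 0" using k by simp
      hence N0: "N k = 0\<^sub>m r r" unfolding t_def by (rule mtrace_adj_self_zero[OF Nc[OF k(1)]])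
      show "orth_sets (mat_range (G * T k)) (mat_range (G * T j))"
        unfolding orth_sets_def mat_range_def
      proof (intro ballI)
        fix u v assume u: "u \<in> {G * T k *\<^sub>v x |x. x \<in> carrier_vec (dim_col (G * T k))}"
          and v: "v \<in> {G * T j *\<^sub>v x |x. x \<in> carrier_vec (dim_col (G * T j))}"
        obtain x where x: "x \<in> carrier_vec r" "u = W k *\<^sub>v x" using u Wc[OF k(1)] by (auto simp: W_def)
        obtain y where y: "y \<in> carrier_vec r" "v = W j *\<^sub>v y" using v Wc[OF j] by (auto simp: W_def)
        have "u \<bullet>c v = x \<bullet>c (adj (W k) *\<^sub>v (W j *\<^sub>v y))"
          unfolding x(2) y(2) by (rule adj_inner[OF Wc[OF k(1)] x(1)]) (use y Wc[OF j] in simp)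
        also have "adj (W k) *\<^sub>v (W j *\<^sub>v y) = N k *\<^sub>v y"
          unfolding N_def using Wc[OF k(1)] Wc[OF j] y(1) by (simp add: assoc_mult_mat_vec[of _ r d _ r])
        also have "\<dots> = 0\<^sub>v r" unfolding N0 by (rule eq_vecI) (use y in auto)
        also have "x \<bullet>c 0\<^sub>v r = 0" using x(1) by (simp add: cinner_sum)
        finally show "u \<bullet>c v = 0" .
      qed
    qed
    show ?thesis using cols orth by simp
  qed
  show ?thesis using part1 part2 by blast
qed


lemma cinner_self: "v \<bullet>c v = complex_of_real (norm_sq_vec v)" "0 \<le> norm_sq_vec v"
proof -
  have "v \<bullet>c v = complex_of_real (\<Sum>i<dim_vec v. (cmod (v $ i))\<^sup>2)"
    by (simp add: cinner_sum mult_cnj_self')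
  thus "v \<bullet>c v = complex_of_real (norm_sq_vec v)" "0 \<le> norm_sq_vec v"
    unfolding norm_sq_vec_def by (auto intro: sum_nonneg)
qed

lemma norm_sq_pos: assumes "v \<noteq> 0\<^sub>v (dim_vec v)" shows "0 < norm_sq_vec v"
proof -
  obtain i where i: "i < dim_vec v" "v $ i \<noteq> 0" using assms by (auto simp: vec_eq_iff)
  have "v \<bullet>c v = complex_of_real (\<Sum>i<dim_vec v. (cmod (v $ i))\<^sup>2)"
    by (simp add: cinner_sum mult_cnj_self')
  hence "norm_sq_vec v = (\<Sum>i<dim_vec v. (cmod (v $ i))\<^sup>2)" unfolding norm_sq_vec_def by simp
  also have "\<dots> > 0" by (rule sum_pos2[of _ i]) (use i in auto)
  finally show ?thesis .
qed

theorem proposition3p6: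
  fixes K :: "complex set" and d r n :: nat and T :: "nat \<Rightarrow> complex mat"
  assumes "field_K K"
    and "\<forall>j\<in>{1..n}. entries_in K (T j)"
    and "is_gframe d r n T"
  shows "(\<forall>j\<in>{1..n}.
            mtrace (mat_adjoint (T j) * mat_inv d (gframe_op d n T) * T j) \<le> of_nat r) \<and>
         (\<forall>j\<in>{1..n}.
            mtrace (mat_adjoint (T j) * mat_inv d (gframe_op d n T) * T j) = of_nat r \<longrightarrow>
              (\<forall>c < r. col (T j) c \<noteq> 0\<^sub>v d) \<and>
              (\<forall>k\<in>{1..n}. k \<noteq> j \<longrightarrow>
                 orth_sets (mat_range (mat_inv d (pd_sqrt d (gframe_op d n T)) * T k))
                           (mat_range (mat_inv d (pd_sqrt d (gframe_op d n T)) * T j))))"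
proof -
  define S where "S = gframe_op d n T"
  have Tc: "\<forall>j\<in>{1..n}. T j \<in> carrier_mat d r" using assms(3) unfolding is_gframe_def by blast
  obtain A where A: "0 < A" and fb: "\<forall>x\<in>carrier_vec d.
           A * norm_sq_vec x \<le> (\<Sum>j=1..n. norm_sq_vec (mat_adjoint (T j) *\<^sub>v x))"
    using assms(3) unfolding is_gframe_def by blast
  define F where "F j = T j * adj (T j)" for j
  have Fc: "\<forall>j\<in>{1..n}. F j \<in> carrier_mat d d"
    using Tc by (auto simp: F_def intro: mult_carrier_mat[of _ d r])
  have Fh: "adj (F j) = F j" if "j \<in> {1..n}" for j
    using Tc that by (simp add: F_def adj_mult[of _ d r _ d])
  have Sc: "S \<in> carrier_mat d d" by (simp add: S_def gframe_op_def)
  have Sd: "\<forall>a<d. \<forall>b<d. S $$ (a,b) = (\<Sum>j\<in>{1..n}. F j $$ (a,b))"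
    by (simp add: S_def gframe_op_def F_def)
  have Sh: "adj S = S"
  proof (rule eq_matI)
    fix a b assume ab: "a < dim_row S" "b < dim_col S"
    hence ab': "a < d" "b < d" using Sc by auto
    have "adj S $$ (a,b) = cnj (S $$ (b,a))" using ab Sc by simp
    also have "\<dots> = (\<Sum>j\<in>{1..n}. cnj (F j $$ (b,a)))" using Sd ab' by simp
    also have "\<dots> = (\<Sum>j\<in>{1..n}. adj (F j) $$ (a,b))"
    proof (intro sum.cong refl)
      fix j assume "j \<in> {1..n}"
      hence "F j \<in> carrier_mat d d" using Fc by simp
      thus "cnj (F j $$ (b,a)) = adj (F j) $$ (a,b)" using ab' by simp
    qed
    also have "\<dots> = S $$ (a,b)" using Fh Sd ab' by simp
    finally show "adj S $$ (a,b) = S $$ (a,b)" .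
  qed (use Sc in auto)
  have Spd: "positive_definite d S"
    unfolding positive_definite_def
  proof (intro conjI ballI impI Sc Sh)
    fix x :: "complex vec" assume x: "x \<in> carrier_vec d" and x0: "x \<noteq> 0\<^sub>v d"
    have "(S *\<^sub>v x) \<bullet>c x = (\<Sum>j\<in>{1..n}. (F j *\<^sub>v x) \<bullet>c x)"
      by (rule quad_decomp[OF _ Sc Fc Sd x]) simp
    also have "\<dots> = (\<Sum>j\<in>{1..n}. complex_of_real (norm_sq_vec (adj (T j) *\<^sub>v x)))"
    proof (intro sum.cong refl)
      fix j assume j: "j \<in> {1..n}"
      have Tj: "T j \<in> carrier_mat d r" using Tc j by simp
      have "F j *\<^sub>v x = T j *\<^sub>v (adj (T j) *\<^sub>v x)" unfolding F_def
        using Tj x by (simp add: assoc_mult_mat_vec[of _ d r _ d])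
      hence "(F j *\<^sub>v x) \<bullet>c x = (adj (T j) *\<^sub>v x) \<bullet>c (adj (T j) *\<^sub>v x)"
        using adj_inner[OF Tj mult_mat_vec_carrier[OF adj_carrier[OF Tj] x] x] by simp
      thus "(F j *\<^sub>v x) \<bullet>c x = complex_of_real (norm_sq_vec (adj (T j) *\<^sub>v x))"
        by (simp add: cinner_self)
    qed
    also have "\<dots> = complex_of_real (\<Sum>j=1..n. norm_sq_vec (adj (T j) *\<^sub>v x))" by simp
    finally have eq: "(S *\<^sub>v x) \<bullet>c x = complex_of_real (\<Sum>j=1..n. norm_sq_vec (adj (T j) *\<^sub>v x))" .
    have "0 < norm_sq_vec x" using x x0 by (intro norm_sq_pos) auto
    hence "0 < A * norm_sq_vec x" using A by simp
    also have "\<dots> \<le> (\<Sum>j=1..n. norm_sq_vec (adj (T j) *\<^sub>v x))" using fb x by simp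
    finally show "0 < (S *\<^sub>v x) \<bullet>c x" unfolding eq by (simp add: complex_pos_iff)
  qed
  obtain G where G: "G \<in> carrier_mat d d" "adj G = G" "G * S * G = 1\<^sub>m d"
    "mat_inv d (pd_sqrt d S) = G" "mat_inv d S = G * G"
    using pd_facts[OF Spd] by blast
  have Sd': "\<forall>a<d. \<forall>b<d. S $$ (a,b) = (\<Sum>k\<in>{1..n}. (T k * adj (T k)) $$ (a,b))"
    using Sd by (simp add: F_def)
  have K: "\<And>j. j \<in> {1..n} \<Longrightarrow> mtrace (adj (T j) * (G * G) * T j) \<le> of_nat r \<and>
    (mtrace (adj (T j) * (G * G) * T j) = of_nat r \<longrightarrow>
      (\<forall>c<r. col (T j) c \<noteq> 0\<^sub>v d) \<and>
      (\<forall>k\<in>{1..n}. k \<noteq> j \<longrightarrow> orth_sets (mat_range (G * T k)) (mat_range (G * T j))))"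
    by (rule key[OF _ _ Tc G(1) G(2) Sc Sd' G(3)]) auto
  show ?thesis unfolding S_def[symmetric] G(4) G(5) using K by blast
qed


end
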